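(* For all integers $m,n\ge 0$ and all real $t$, $$H_{m,n}(t)=m!\,n!\left(\frac{1}{\sqrt2}\right)^{m+n}\sum_{j=0}^{n}\sum_{k=j}^{m}\frac{(-1)^j}{j!\,(k-j)!}\,H_{k-j}(0)\,\frac{H_{m-k,n-j}(\sqrt2\,t)}{(m-k)!\,(n-j)!},$$ where an inner sum with empty range ($j>m$) is zero.
   Context: For integers $m\ge 0$, the Hermite polynomial is $H_m(x)=(-1)^m e^{x^2}\frac{d^m}{dx^m}\big(e^{-x^2}\big)$. For integers $m,n\ge 0$, the two-index Hermite polynomial is $H_{m,n}(x)=\left(-\frac{d}{dx}+2x\right)^m(x^n)$, i.e. the operator $f\mapsto -f'+2xf$ applied $m$ times to $x^n$. *)

theory Defs
  imports "HOL-Analysis.Analysis"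
begin

definition hermite :: "nat \<Rightarrow> real \<Rightarrow> real" where
  "hermite m x = (-1) ^ m * exp (x\<^sup>2) * (deriv ^^ m) (\<lambda>y. exp (- (y\<^sup>2))) x"

definition hermite_op :: "(real \<Rightarrow> real) \<Rightarrow> (real \<Rightarrow> real)" where
  "hermite_op f = (\<lambda>x. - deriv f x + 2 * x * f x)"

definition hermite2 :: "nat \<Rightarrow> nat \<Rightarrow> real \<Rightarrow> real" where
  "hermite2 m n = (hermite_op ^^ m) (\<lambda>x. x ^ n)"

end

theory Submission
  imports Defs "HOL-Computational_Algebra.Formal_Power_Series"
begin

lemma H0: "hermite2 0 n = (\<lambda>x. x ^ n)"
  by (simp add: hermite2_def)

lemma HSuc_op: "hermite2 (Suc m) n x = - deriv (hermite2 m n) x + 2 * x * hermite2 m n x"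
  by (simp add: hermite2_def hermite_op_def)

lemma H_deriv:
  "(hermite2 m n has_real_derivative
      (2 * real m * hermite2 (m-1) n x + real n * hermite2 m (n-1) x)) (at x)"
proof (induction m arbitrary: n x rule: less_induct)
  case (less m)
  show ?case
  proof (cases m)
    case 0
    show ?thesis using DERIV_pow[of n x] by (simp add: 0 H0)
  next
    case (Suc k)
    have rec: "hermite2 (Suc j) n' y = 2 * y * hermite2 j n' y - 2 * real j * hermite2 (j-1) n' y
        - real n' * hermite2 j (n'-1) y" if "j < m" for j n' y
      using HSuc_op[of j n' y] DERIV_imp_deriv[OF less[OF that, of n' y]] by simp
    have hfun: "hermite2 m n = (\<lambda>y. 2 * y * hermite2 k n y - 2 * real k * hermite2 (k-1) n y
        - real n * hermite2 k (n-1) y)"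
      using rec[of k] Suc by auto
    have d: "(hermite2 m n has_real_derivative
        (2 * hermite2 k n x + 2 * x * (2 * real k * hermite2 (k-1) n x + real n * hermite2 k (n-1) x))
        - 2 * real k * (2 * real (k-1) * hermite2 (k-1-1) n x + real n * hermite2 (k-1) (n-1) x)
        - real n * (2 * real k * hermite2 (k-1) (n-1) x + real (n-1) * hermite2 k (n-1-1) x)) (at x)"
      unfolding hfun
      by (rule derivative_eq_intros less Suc | simp add: Suc)+
    have e1: "real n * hermite2 (Suc k) (n-1) x = real n * (2 * x * hermite2 k (n-1) x - 2 * real k * hermite2 (k-1) (n-1) x
        - real (n-1) * hermite2 k (n-1-1) x)"
      using rec[of k] Suc by auto
    have e2: "real k * hermite2 k n x = real k * (2 * x * hermite2 (k-1) n x - 2 * real (k-1) * hermite2 (k-1-1) n x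
        - real n * hermite2 (k-1) (n-1) x)"
    proof (cases k)
      case (Suc k')
      then show ?thesis using rec[of k'] \<open>m = Suc k\<close> by auto
    qed simp
    show ?thesis
      apply (rule DERIV_cong[OF d])
      using e1 e2 by (simp add: Suc algebra_simps)
  qed
qed

lemma H_Suc: "hermite2 (Suc j) n y = 2 * y * hermite2 j n y - 2 * real j * hermite2 (j-1) n y
        - real n * hermite2 j (n-1) y"
  using HSuc_op[of j n y] DERIV_imp_deriv[OF H_deriv[of j n y]] by simp

lemma gauss_derivs:
  "(deriv ^^ k) (\<lambda>y. exp (- (y\<^sup>2))) = (\<lambda>y. (-1) ^ k * hermite2 k 0 y * exp (- (y\<^sup>2)))"
proof (induction k)
  case 0
  then show ?case by (simp add: H0)
next
  case (Suc k)
  show ?case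
  proof (rule ext)
    fix y
    have d: "((\<lambda>y. (-1) ^ k * hermite2 k 0 y * exp (- (y\<^sup>2))) has_real_derivative
        (-1) ^ k * (2 * real k * hermite2 (k-1) 0 y) * exp (- (y\<^sup>2))
        + (-1) ^ k * hermite2 k 0 y * (exp (- (y\<^sup>2)) * (- (2 * y)))) (at y)"
      by (rule derivative_eq_intros H_deriv refl | simp)+
    show "(deriv ^^ Suc k) (\<lambda>y. exp (- y\<^sup>2)) y = (-1) ^ Suc k * hermite2 (Suc k) 0 y * exp (- y\<^sup>2)"
      using DERIV_imp_deriv[OF d] Suc by (simp add: H_Suc algebra_simps)
  qed
qed

lemma hermite_0: "hermite k 0 = hermite2 k 0 0"
  by (simp add: hermite_def gauss_derivs flip: power_mult_distrib)

definition E :: "real \<Rightarrow> real \<Rightarrow> nat \<Rightarrow> real fps" where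
  "E x l q = Abs_fps (\<lambda>p. l ^ (p + q) * hermite2 p q x / (fact p * fact q))"

lemma E_nth: "fps_nth (E x l q) p = l ^ (p + q) * hermite2 p q x / (fact p * fact q)"
  by (simp add: E_def)

lemma E_coeff:
  "real (Suc p) * (l ^ (Suc p + q) * hermite2 (Suc p) q x / (fact (Suc p) * fact q)) =
    2 * x * l * (l ^ (p + q) * hermite2 p q x / (fact p * fact q))
    - 2 * l^2 * (if p = 0 then 0 else l ^ (p - 1 + q) * hermite2 (p-1) q x / (fact (p-1) * fact q))
    - l^2 * (if q = 0 then 0 else l ^ (p + (q-1)) * hermite2 p (q-1) x / (fact p * fact (q-1)))"
proof -
  have L: "real (Suc p) * (l ^ (Suc p + q) * hermite2 (Suc p) q x / (fact (Suc p) * fact q))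
     = l ^ (Suc p + q) * hermite2 (Suc p) q x / (fact p * fact q)"
    unfolding fact_Suc of_nat_mult by (simp del: of_nat_Suc)
  have A: "2 * l^2 * (if p = 0 then 0 else l ^ (p - 1 + q) * hermite2 (p-1) q x / (fact (p-1) * fact q))
     = l ^ (Suc p + q) * (2 * real p * hermite2 (p-1) q x) / (fact p * fact q)"
  proof (cases p)
    case (Suc p') then show ?thesis by (simp add: fact_Suc field_simps power2_eq_square del: of_nat_Suc)
  qed simp
  have B: "l^2 * (if q = 0 then 0 else l ^ (p + (q-1)) * hermite2 p (q-1) x / (fact p * fact (q-1)))
     = l ^ (Suc p + q) * (real q * hermite2 p (q-1) x) / (fact p * fact q)"
  proof (cases q)
    case (Suc q') then show ?thesis by (simp add: fact_Suc field_simps power2_eq_square del: of_nat_Suc)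
  qed simp
  show ?thesis unfolding L A B unfolding H_Suc by (simp add: field_simps)
qed

lemma E_deriv:
  "fps_deriv (E x l q) = fps_const (2 * x * l) * E x l q - fps_const (2 * l^2) * (fps_X * E x l q)
     - fps_const (l^2) * (if q = 0 then 0 else E x l (q - 1))"
proof (rule fps_ext)
  fix p
  show "fps_nth (fps_deriv (E x l q)) p = fps_nth (fps_const (2 * x * l) * E x l q - fps_const (2 * l^2) * (fps_X * E x l q)
     - fps_const (l^2) * (if q = 0 then 0 else E x l (q - 1))) p"
    using E_coeff[of p l q x] by (simp add: E_nth mult.assoc)
qed


lemma fps_ode_unique:
  fixes D P :: "real fps"
  assumes d: "fps_deriv D = P * D" and z: "fps_nth D 0 = 0"
  shows "D = 0"
proof -
  have "\<forall>k\<le>m. fps_nth D k = 0" for m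
  proof (induction m)
    case 0 then show ?case using z by simp
  next
    case (Suc m)
    have "fps_nth (fps_deriv D) m = fps_nth (P * D) m" using d by simp
    also have "\<dots> = (\<Sum>i=0..m. fps_nth P i * fps_nth D (m - i))" by (rule fps_mult_nth)
    also have "\<dots> = 0" using Suc by (intro sum.neutral) auto
    finally have "fps_nth D (Suc m) = 0" by simp
    then show ?case using Suc by (auto simp: le_Suc_eq)
  qed
  then show ?thesis by (intro fps_ext) auto
qed

definition cc :: "nat \<Rightarrow> real" where "cc j = (-1) ^ j * (1/2) ^ j / fact j"
definition Cc :: "nat \<Rightarrow> real fps" where "Cc j = fps_const (cc j) * fps_X ^ j"
definition Hh :: "real fps" where "Hh = E 0 (1 / sqrt 2) 0"
definition B :: "real \<Rightarrow> nat \<Rightarrow> real fps" where "B t q = E (sqrt 2 * t) (1 / sqrt 2) q"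
definition R :: "real \<Rightarrow> nat \<Rightarrow> real fps" where "R t n = (\<Sum>j=0..n. Cc j * Hh * B t (n - j))"

lemma r2: "(1 / sqrt 2) ^ 2 = (1/2::real)"
  by (simp add: power_divide)

lemma Hh_deriv: "fps_deriv Hh = - (fps_X * Hh)"
  unfolding Hh_def by (simp add: E_deriv r2)

lemma B_deriv: "fps_deriv (B t q) = fps_const (2 * t) * B t q - fps_X * B t q
    - fps_const (1/2) * (if q = 0 then 0 else B t (q - 1))"
  unfolding B_def by (simp add: E_deriv r2)

lemma cc_Suc: "cc (Suc j) * real (Suc j) = - (1/2) * cc j"
  unfolding cc_def by (simp add: fact_Suc field_simps del: of_nat_Suc)

lemma Cc_deriv0: "fps_deriv (Cc 0) = 0"
  by (simp add: Cc_def)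

lemma Cc_derivSuc: "fps_deriv (Cc (Suc j)) = - (fps_const (1/2) * Cc j)"
proof -
  have "fps_deriv (Cc (Suc j)) = fps_const (cc (Suc j) * real (Suc j)) * fps_X ^ j"
    unfolding Cc_def fps_deriv_mult_const_left fps_deriv_power
    by (simp flip: fps_const_mult add: mult.assoc)
  also have "\<dots> = - (fps_const (1/2) * Cc j)"
    unfolding cc_Suc Cc_def by (simp flip: fps_const_mult fps_const_neg add: mult.assoc)
  finally show ?thesis .
qed

lemma term_deriv:
  "fps_deriv (Cc j * Hh * B t q) = (fps_const (2*t) - fps_const 2 * fps_X) * (Cc j * Hh * B t q)
     + fps_deriv (Cc j) * Hh * B t q - fps_const (1/2) * (Cc j * Hh * (if q = 0 then 0 else B t (q - 1)))"
  by (simp add: Hh_deriv B_deriv algebra_simps numeral_2_eq_2 fps_const_add [symmetric])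


lemma R_deriv:
  "fps_deriv (R t n) = (fps_const (2*t) - fps_const 2 * fps_X) * R t n - (if n = 0 then 0 else R t (n - 1))"
proof -
  define P where "P = fps_const (2*t) - fps_const 2 * (fps_X :: real fps)"
  define S1 where "S1 = (\<Sum>j=0..n. fps_deriv (Cc j) * Hh * B t (n - j))"
  define S2 where "S2 = (\<Sum>j=0..n. Cc j * Hh * (if n - j = 0 then 0 else B t (n - j - 1)))"
  have "fps_deriv (R t n) = (\<Sum>j=0..n. P * (Cc j * Hh * B t (n - j)) + fps_deriv (Cc j) * Hh * B t (n - j)
      - fps_const (1/2) * (Cc j * Hh * (if n - j = 0 then 0 else B t (n - j - 1))))"
    unfolding R_def fps_deriv_sum P_def by (intro sum.cong refl term_deriv)
  also have "\<dots> = P * R t n + S1 - fps_const (1/2) * S2"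
    unfolding R_def S1_def S2_def by (simp add: sum.distrib sum_subtractf sum_distrib_left)
  finally have main: "fps_deriv (R t n) = P * R t n + S1 - fps_const (1/2) * S2" .
  have X: "S1 - fps_const (1/2) * S2 = - (if n = 0 then 0 else R t (n - 1))"
  proof (cases n)
    case 0 then show ?thesis by (simp add: S1_def S2_def Cc_deriv0)
  next
    case (Suc n')
    have "S1 = (\<Sum>j=0..n'. fps_deriv (Cc (Suc j)) * Hh * B t (n' - j))"
      unfolding S1_def Suc sum.atLeast0_atMost_Suc_shift by (simp add: Cc_deriv0)
    also have "\<dots> = - (fps_const (1/2) * R t n')"
      unfolding R_def Cc_derivSuc by (simp add: sum_distrib_left sum_negf mult.assoc)
    finally have 1: "S1 = - (fps_const (1/2) * R t n')" .
    have 2: "S2 = R t n'"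
      unfolding S2_def R_def Suc sum.atLeast0_atMost_Suc
      by (auto intro!: sum.cong simp: Suc_diff_le)
    show ?thesis using 1 2 Suc by (simp add: algebra_simps flip: fps_const_add)
  qed
  have "fps_deriv (R t n) = P * R t n + (S1 - fps_const (1/2) * S2)" using main by (simp add: algebra_simps)
  then show ?thesis unfolding X P_def by simp
qed


lemma R_0: "fps_nth (R t n) 0 = t ^ n / fact n"
proof -
  have "fps_nth (R t n) 0 = (\<Sum>j=0..n. if j = 0 then fps_nth Hh 0 * fps_nth (B t n) 0 else 0)"
    unfolding R_def fps_sum_nth by (intro sum.cong refl) (auto simp: Cc_def cc_def)
  also have "\<dots> = fps_nth Hh 0 * fps_nth (B t n) 0" by simp
  also have "\<dots> = t ^ n / fact n"
    by (simp add: Hh_def B_def E_nth H0 flip: power_mult_distrib)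
  finally show ?thesis .
qed

lemma E_eq_R: "E t 1 n = R t n"
proof (induction n)
  case 0
  define P where "P = fps_const (2*t) - fps_const 2 * (fps_X :: real fps)"
  have "fps_deriv (E t 1 0 - R t 0) = P * (E t 1 0 - R t 0)"
    by (simp only: fps_deriv_sub R_deriv E_deriv) (simp add: P_def algebra_simps)
  moreover have "fps_nth (E t 1 0 - R t 0) 0 = 0" by (simp add: R_0 E_nth H0)
  ultimately show ?case using fps_ode_unique by fastforce
next
  case (Suc n)
  define P where "P = fps_const (2*t) - fps_const 2 * (fps_X :: real fps)"
  have "fps_deriv (E t 1 (Suc n) - R t (Suc n)) = P * (E t 1 (Suc n) - R t (Suc n))"
    by (simp only: fps_deriv_sub R_deriv E_deriv) (simp add: P_def Suc algebra_simps)
  moreover have "fps_nth (E t 1 (Suc n) - R t (Suc n)) 0 = 0" by (simp add: R_0 E_nth H0)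
  ultimately show ?case using fps_ode_unique by fastforce
qed


lemma coeff_R: "fps_nth (R t n) m = (\<Sum>j=0..n. if j \<le> m then cc j *
    (\<Sum>a=0..m-j. fps_nth Hh a * fps_nth (B t (n - j)) (m - j - a)) else 0)"
  unfolding R_def fps_sum_nth
  apply (intro sum.cong refl)
  apply (simp only: Cc_def mult.assoc fps_mult_left_const_nth fps_X_power_mult_nth)
  apply (simp add: fps_mult_nth)
  done

lemma term_eq:
  assumes "j \<le> m" "j \<le> n" "a \<le> m - j"
  shows "cc j * (fps_nth Hh a * fps_nth (B t (n - j)) (m - j - a)) =
    (1 / sqrt 2) ^ (m + n) *
      ((-1) ^ j / (fact j * fact (a + j - j)) * hermite (a + j - j) 0 *
       hermite2 (m - (a + j)) (n - j) (sqrt 2 * t) / (fact (m - (a + j)) * fact (n - j)))"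
proof -
  define r :: real where "r = 1 / sqrt 2"
  have mn: "m + n = a + ((m - j - a) + (n - j)) + 2 * j" using assms by arith
  have pw: "r ^ (m + n) = r ^ a * r ^ ((m - j - a) + (n - j)) * (1/2) ^ j"
    unfolding mn power_add power_mult r_def r2 by simp
  have e: "m - (a + j) = m - j - a" by arith
  show ?thesis
    unfolding r_def[symmetric] pw e
    by (simp add: cc_def Hh_def B_def E_nth hermite_0 r_def field_simps)
qed

theorem mainTheorem9:
  fixes m n :: nat and t :: real
  shows "hermite2 m n t =
    fact m * fact n * (1 / sqrt 2) ^ (m + n) *
    (\<Sum>j = 0..n. \<Sum>k = j..m.
       (-1) ^ j / (fact j * fact (k - j)) * hermite (k - j) 0 *
       hermite2 (m - k) (n - j) (sqrt 2 * t) / (fact (m - k) * fact (n - j)))"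
proof -
  have "hermite2 m n t = fact m * fact n * fps_nth (E t 1 n) m"
    by (simp add: E_nth)
  also have "\<dots> = fact m * fact n * fps_nth (R t n) m" by (simp add: E_eq_R)
  also have "fps_nth (R t n) m = 
    (\<Sum>j = 0..n. \<Sum>k = j..m. (1 / sqrt 2) ^ (m + n) *
       ((-1) ^ j / (fact j * fact (k - j)) * hermite (k - j) 0 *
       hermite2 (m - k) (n - j) (sqrt 2 * t) / (fact (m - k) * fact (n - j))))"
    unfolding coeff_R
  proof (intro sum.cong refl)
    fix j assume j: "j \<in> {0..n}"
    show "(if j \<le> m then cc j * (\<Sum>a=0..m-j. fps_nth Hh a * fps_nth (B t (n - j)) (m - j - a)) else 0) =
      (\<Sum>k = j..m. (1 / sqrt 2) ^ (m + n) * ((-1) ^ j / (fact j * fact (k - j)) * hermite (k - j) 0 *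
       hermite2 (m - k) (n - j) (sqrt 2 * t) / (fact (m - k) * fact (n - j))))"
    proof (cases "j \<le> m")
      case True
      have "{j..m} = {0 + j..(m - j) + j}" using True by simp
      then have sh: "(\<Sum>k = j..m. f k) = (\<Sum>a = 0..m - j. f (a + j))" for f :: "nat \<Rightarrow> real"
        by (simp only: sum.shift_bounds_cl_nat_ivl)
      show ?thesis unfolding sh sum_distrib_left if_P[OF True]
        by (intro sum.cong refl term_eq) (use True j in auto)
    qed simp
  qed
  finally show ?thesis by (simp add: mult.assoc sum_distrib_left)
qed

end
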